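(* Assume the orthonormality assumption (A), let $T\ge 2$ and $z_{1:T}\in[V]^T$ with $z_T=q$ and $z_1\neq q$. Let $v_1\neq v_2$ in $[V]$ and suppose the only patterns "$q\,v$" occurring in $z_{1:T}$ are $q\,v_1$ and $q\,v_2$, i.e. $f(v)=0$ for all $v\notin\{v_1,v_2\}$, with $f(v_1)+f(v_2)\ge 1$. For fixed $\tau_3>0$ let $\xi^*_v=\lim_{\tau_2\to\infty}\lim_{\tau_1\to\infty}\xi_v(\tau_1,\tau_2,\tau_3)$. Then every maximizer of $v\mapsto\xi^*_v$ over $[V]$ belongs to $\{v_1,v_2\}\cup\operatorname{argmax}_{v\in[V]\setminus\{v_1,v_2\}}\pi_b(v\mid q)$.
   Context: Vocabulary $[V]=\{1,\dots,V\}$, dimension $d$. Given: embedding vectors $w_E(v)\in\mathbb R^d$ and unembedding vectors $w_U(v)\in\mathbb R^d$ for $v\in[V]$; relative positional vectors $r_0,r_{-1},\dots,r_{-(T-1)}\in\mathbb R^d$; matrices $\Phi_1,W_V^2\in\mathbb R^{d\times d}$; a bigram kernel $\pi_b(u\mid v)>0$ with $\sum_u\pi_b(u\mid v)=1$; parameters $\tau_1,\tau_2,\tau_3>0$. $\sigma$ denotes the softmax. The two-layer transformer with relative positional encoding ("stronger associative memory transformer") acts on $z_{1:T}\in[V]^T$ as follows. Set $W_K^1=\tau_1\sum_{k\in[V]}w_E(k)r_{-1}^\top$, $W_K^2=\tau_2\sum_{k\in[V]}w_E(k)(\Phi_1w_E(k))^\top$, $W_O^2=\tau_3\sum_{v\in[V]}w_U(v)(W_V^2w_E(v))^\top$.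 First layer: for $t\in[T]$ and $s\in[t]$, let $a_{t,s}=(w_E(z_s)+r_{s-t})^\top (W_K^1)^\top w_E(z_t)$ and $x^{(1)}_t=\sum_{s=1}^t\sigma(a_{t,\cdot})_s\,\Phi_1w_E(z_s)+w_E(z_t)$. Second layer: for $s\in[T]$ let $b_s=(x_s^{(1)})^\top (W_K^2)^\top x_T^{(1)}$ and $x_T^{(2)}=\sum_{s=1}^T\sigma(b)_s\,W_O^2W_V^2x_s^{(1)}+x_T^{(1)}$. Feed-forward layer: $W_1\in\mathbb R^{V\times d}$ has $v$-th row $w_E(v)^\top$, $W_2\in\mathbb R^{d\times V}$ has $v$-th column $\sum_{u=1}^V\log\pi_b(u\mid v)\,w_U(u)$, and $x_T=W_2\,\mathrm{ReLU}(W_1x_T^{(2)})+x_T^{(2)}$. The logits are $\xi_v=w_U(v)^\top x_T$ for $v\in[V]$ (written $\xi_v(\tau_1,\tau_2,\tau_3)$ to show dependence on the parameters). Orthonormality assumption (A): the $3V+T$ vectors $w_E(v),\ \Phi_1w_E(v),\ w_U(v)$ ($v\in[V]$) and $r_{-i}$ ($0\le i\le T-1$) form an orthonormal family in $\mathbb R^d$, and the $2V$ vectors $W_V^2w_E(v),\ W_V^2\Phi_1w_E(v)$ ($v\in[V]$) form an orthonormal family in $\mathbb R^d$. For $v\in[V]$, $f(v)=\#\{s\in\{2,\dots,T\}: z_{s-1}=q,\ z_s=v\}$. *)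

theory Defs
  imports "HOL-Analysis.Analysis"
begin

text \<open>Vocabulary [V] = {1..V}, positions [T] = {1..T}.
  The relative positional vector r_{-i} (0 <= i <= T-1) is represented as r i.
  The bigram kernel pi_b(u | v) is represented as pib u v.\<close>

definition softmax :: "(nat \<Rightarrow> real) \<Rightarrow> nat set \<Rightarrow> nat \<Rightarrow> real" where
  "softmax a S s = exp (a s) / (\<Sum>s'\<in>S. exp (a s'))"

definition outer :: "real^'d \<Rightarrow> real^'d \<Rightarrow> real^'d^'d" where
  "outer a b = (\<chi> i j. a$i * b$j)"

definition relu :: "real \<Rightarrow> real" where
  "relu x = max 0 x"

definition WK1 :: "(nat \<Rightarrow> real^'d) \<Rightarrow> (nat \<Rightarrow> real^'d) \<Rightarrow> nat \<Rightarrow> real \<Rightarrow> real^'d^'d" where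
  "WK1 wE r V \<tau>1 = \<tau>1 *\<^sub>R (\<Sum>k\<in>{1..V}. outer (wE k) (r 1))"

definition WK2 :: "(nat \<Rightarrow> real^'d) \<Rightarrow> real^'d^'d \<Rightarrow> nat \<Rightarrow> real \<Rightarrow> real^'d^'d" where
  "WK2 wE \<Phi>1 V \<tau>2 = \<tau>2 *\<^sub>R (\<Sum>k\<in>{1..V}. outer (wE k) (\<Phi>1 *v wE k))"

definition WO2 :: "(nat \<Rightarrow> real^'d) \<Rightarrow> (nat \<Rightarrow> real^'d) \<Rightarrow> real^'d^'d \<Rightarrow> nat \<Rightarrow> real \<Rightarrow> real^'d^'d" where
  "WO2 wE wU WV2 V \<tau>3 = \<tau>3 *\<^sub>R (\<Sum>v\<in>{1..V}. outer (wU v) (WV2 *v wE v))"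

definition layer1 :: "(nat \<Rightarrow> real^'d) \<Rightarrow> (nat \<Rightarrow> real^'d) \<Rightarrow> real^'d^'d \<Rightarrow> nat
    \<Rightarrow> (nat \<Rightarrow> nat) \<Rightarrow> real \<Rightarrow> nat \<Rightarrow> real^'d" where
  "layer1 wE r \<Phi>1 V z \<tau>1 t =
     (\<Sum>s\<in>{1..t}. softmax (\<lambda>s. (WK1 wE r V \<tau>1 *v (wE (z s) + r (t - s))) \<bullet> wE (z t)) {1..t} s
                  *\<^sub>R (\<Phi>1 *v wE (z s))) + wE (z t)"

definition layer2 :: "(nat \<Rightarrow> real^'d) \<Rightarrow> (nat \<Rightarrow> real^'d) \<Rightarrow> (nat \<Rightarrow> real^'d) \<Rightarrow> real^'d^'d
    \<Rightarrow> real^'d^'d \<Rightarrow> nat \<Rightarrow> nat \<Rightarrow> (nat \<Rightarrow> nat) \<Rightarrow> real \<Rightarrow> real \<Rightarrow> real \<Rightarrow> real^'d" where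
  "layer2 wE wU r \<Phi>1 WV2 V T z \<tau>1 \<tau>2 \<tau>3 =
     (let x1 = layer1 wE r \<Phi>1 V z \<tau>1 in
      (\<Sum>s\<in>{1..T}. softmax (\<lambda>s. (WK2 wE \<Phi>1 V \<tau>2 *v x1 s) \<bullet> x1 T) {1..T} s
                   *\<^sub>R (WO2 wE wU WV2 V \<tau>3 *v (WV2 *v x1 s))) + x1 T)"

text \<open>Output of the feed-forward layer x_T = W_2 ReLU(W_1 x^{(2)}_T) + x^{(2)}_T, where
  the v-th row of W_1 is wE(v)^T and the v-th column of W_2 is sum_u log pi_b(u|v) wU(u).\<close>
definition ffn_out :: "(nat \<Rightarrow> real^'d) \<Rightarrow> (nat \<Rightarrow> real^'d) \<Rightarrow> (nat \<Rightarrow> real^'d) \<Rightarrow> real^'d^'d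
    \<Rightarrow> real^'d^'d \<Rightarrow> (nat \<Rightarrow> nat \<Rightarrow> real) \<Rightarrow> nat \<Rightarrow> nat \<Rightarrow> (nat \<Rightarrow> nat)
    \<Rightarrow> real \<Rightarrow> real \<Rightarrow> real \<Rightarrow> real^'d" where
  "ffn_out wE wU r \<Phi>1 WV2 pib V T z \<tau>1 \<tau>2 \<tau>3 =
     (let x2 = layer2 wE wU r \<Phi>1 WV2 V T z \<tau>1 \<tau>2 \<tau>3 in
      (\<Sum>v\<in>{1..V}. relu (wE v \<bullet> x2) *\<^sub>R (\<Sum>u\<in>{1..V}. ln (pib u v) *\<^sub>R wU u)) + x2)"

definition xi :: "(nat \<Rightarrow> real^'d) \<Rightarrow> (nat \<Rightarrow> real^'d) \<Rightarrow> (nat \<Rightarrow> real^'d) \<Rightarrow> real^'d^'d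
    \<Rightarrow> real^'d^'d \<Rightarrow> (nat \<Rightarrow> nat \<Rightarrow> real) \<Rightarrow> nat \<Rightarrow> nat \<Rightarrow> (nat \<Rightarrow> nat)
    \<Rightarrow> real \<Rightarrow> real \<Rightarrow> real \<Rightarrow> nat \<Rightarrow> real" where
  "xi wE wU r \<Phi>1 WV2 pib V T z \<tau>1 \<tau>2 \<tau>3 v =
     wU v \<bullet> ffn_out wE wU r \<Phi>1 WV2 pib V T z \<tau>1 \<tau>2 \<tau>3"

datatype fam_idx = IE nat | IPhiE nat | IU nat | IR nat

fun famA :: "(nat \<Rightarrow> real^'d) \<Rightarrow> (nat \<Rightarrow> real^'d) \<Rightarrow> (nat \<Rightarrow> real^'d) \<Rightarrow> real^'d^'d
    \<Rightarrow> fam_idx \<Rightarrow> real^'d" where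
  "famA wE wU r \<Phi>1 (IE v) = wE v"
| "famA wE wU r \<Phi>1 (IPhiE v) = \<Phi>1 *v wE v"
| "famA wE wU r \<Phi>1 (IU v) = wU v"
| "famA wE wU r \<Phi>1 (IR i) = r i"

definition orthonormal_family :: "('i \<Rightarrow> real^'d) \<Rightarrow> 'i set \<Rightarrow> bool" where
  "orthonormal_family x I \<longleftrightarrow> (\<forall>i\<in>I. \<forall>j\<in>I. x i \<bullet> x j = (if i = j then 1 else 0))"

definition assumptionA :: "(nat \<Rightarrow> real^'d) \<Rightarrow> (nat \<Rightarrow> real^'d) \<Rightarrow> (nat \<Rightarrow> real^'d) \<Rightarrow> real^'d^'d
    \<Rightarrow> real^'d^'d \<Rightarrow> nat \<Rightarrow> nat \<Rightarrow> bool" where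
  "assumptionA wE wU r \<Phi>1 WV2 V T \<longleftrightarrow>
     orthonormal_family (famA wE wU r \<Phi>1)
       (IE ` {1..V} \<union> IPhiE ` {1..V} \<union> IU ` {1..V} \<union> IR ` {0..T-1}) \<and>
     orthonormal_family (\<lambda>x. case x of Inl v \<Rightarrow> WV2 *v wE v | Inr v \<Rightarrow> WV2 *v (\<Phi>1 *v wE v))
       (Inl ` {1..V} \<union> Inr ` {1..V})"

definition fcount :: "(nat \<Rightarrow> nat) \<Rightarrow> nat \<Rightarrow> nat \<Rightarrow> nat \<Rightarrow> nat" where
  "fcount z T q v = card {s\<in>{2..T}. z (s - 1) = q \<and> z s = v}"

end

theory Submission imports Defs "HOL-Real_Asymp.Real_Asymp" begin

lemma outer_mv: "outer a b *v x = (b \<bullet> x) *\<^sub>R a"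
  by (simp add: outer_def matrix_vector_mult_def inner_vec_def vec_eq_iff sum_distrib_left mult_ac)

lemma sum_mv: "(\<Sum>k\<in>K. M k) *v x = (\<Sum>k\<in>K. M k *v x)"
  by (induct K rule: infinite_finite_induct) (auto simp: matrix_vector_mult_add_rdistrib)

lemma smult_mv: fixes M :: "real^'n^'m" shows "(c *\<^sub>R M) *v x = c *\<^sub>R (M *v x)"
  using scaleR_matrix_vector_assoc[of c M x] by simp

lemma mv_sum: "M *v (\<Sum>k\<in>K. x k) = (\<Sum>k\<in>K. M *v x k)"
  by (induct K rule: infinite_finite_induct) (auto simp: matrix_vector_right_distrib)

lemma softmax_lim:
  fixes e :: "nat \<Rightarrow> real"
  assumes S: "finite S" and e01: "\<forall>s\<in>S. e s = 0 \<or> e s = 1" and N: "card {s\<in>S. e s = 1} \<ge> 1"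
    and s: "s \<in> S"
  shows "((\<lambda>\<tau>. softmax (\<lambda>s. \<tau> * e s) S s) \<longlongrightarrow> e s / card {s\<in>S. e s = 1}) at_top"
proof -
  define A where "A = {s\<in>S. e s = 1}"
  define n where "n = real (card A)"
  define m where "m = real (card (S - A))"
  have n1: "n \<ge> 1" using N by (simp add: n_def A_def)
  have m0: "m \<ge> 0" by (simp add: m_def)
  have sum: "(\<Sum>s'\<in>S. exp (\<tau> * e s')) = n * exp \<tau> + m" for \<tau>
  proof -
    have "(\<Sum>s'\<in>S. exp (\<tau> * e s')) = (\<Sum>s'\<in>A. exp (\<tau> * e s')) + (\<Sum>s'\<in>S - A. exp (\<tau> * e s'))"
      using S by (metis (no_types, lifting) A_def mem_Collect_eq subsetI sum.subset_diff add.commute)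
    also have "(\<Sum>s'\<in>A. exp (\<tau> * e s')) = (\<Sum>s'\<in>A. exp \<tau>)" by (rule sum.cong) (auto simp: A_def)
    also have "(\<Sum>s'\<in>S - A. exp (\<tau> * e s')) = (\<Sum>s'\<in>S - A. 1)"
      by (rule sum.cong) (use e01 in \<open>auto simp: A_def\<close>)
    finally show ?thesis by (simp add: n_def m_def)
  qed
  show ?thesis
  proof (cases "e s = 1")
    case True
    have "((\<lambda>\<tau>. exp \<tau> / (n * exp \<tau> + m)) \<longlongrightarrow> inverse n) at_top"
      using n1 m0 by real_asymp
    then show ?thesis using True by (simp add: softmax_def sum n_def A_def inverse_eq_divide)
  next
    case False
    then have "e s = 0" using e01 s by auto
    have "((\<lambda>\<tau>. 1 / (n * exp \<tau> + m)) \<longlongrightarrow> 0) at_top"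
      using n1 m0 by real_asymp
    then show ?thesis using \<open>e s = 0\<close> by (simp add: softmax_def sum)
  qed
qed


lemma softmax_cong': "t \<in> S \<Longrightarrow> (\<And>s. s \<in> S \<Longrightarrow> a s = b s) \<Longrightarrow> softmax a S t = softmax b S t"
  unfolding softmax_def by (metis sum.cong)

lemma xi_closed:
  fixes wE wU r :: "nat \<Rightarrow> real^'d"
    and \<Phi>1 WV2 :: "real^'d^'d"
    and pib :: "nat \<Rightarrow> nat \<Rightarrow> real"
    and V T q :: nat
    and z :: "nat \<Rightarrow> nat"
    and \<tau>3 :: real
  assumes A: "assumptionA wE wU r \<Phi>1 WV2 V T"
    and T2: "T \<ge> 2"
    and z_range: "\<forall>s\<in>{1..T}. z s \<in> {1..V}"
    and zT: "z T = q"
  defines "\<alpha>f \<equiv> (\<lambda>\<tau>1 t s. softmax (\<lambda>s. \<tau>1 * (if s = t - 1 then 1 else 0)) {1..t} s)"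
  defines "\<beta> \<equiv> (\<lambda>\<tau>1 s. \<Sum>s'\<in>{1..s}. \<alpha>f \<tau>1 s s' * (if z s' = q then 1 else 0))"
  assumes v: "v \<in> {1..V}"
  shows "xi wE wU r \<Phi>1 WV2 pib V T z \<tau>1 \<tau>2 \<tau>3 v = ln (pib v q) + \<tau>3 *
      (\<Sum>s\<in>{1..T}. softmax (\<lambda>s. \<tau>2 * \<beta> \<tau>1 s) {1..T} s * (if z s = v then 1 else 0))"
proof -
  define IA where "IA = IE ` {1..V} \<union> IPhiE ` {1..V} \<union> IU ` {1..V} \<union> IR ` {0..T-1}"
  define IB where "IB = (Inl ` {1..V} \<union> Inr ` {1..V} :: (nat + nat) set)"
  define P where "P = (\<lambda>x. \<Phi>1 *v wE x)"
  have on1: "\<And>i j. i \<in> IA \<Longrightarrow> j \<in> IA \<Longrightarrow> famA wE wU r \<Phi>1 i \<bullet> famA wE wU r \<Phi>1 j = (if i = j then 1 else 0)"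
    using A unfolding assumptionA_def orthonormal_family_def IA_def by blast
  have on2: "\<And>i j. i \<in> IB \<Longrightarrow> j \<in> IB \<Longrightarrow>
     (case i of Inl v \<Rightarrow> WV2 *v wE v | Inr v \<Rightarrow> WV2 *v (\<Phi>1 *v wE v)) \<bullet>
     (case j of Inl v \<Rightarrow> WV2 *v wE v | Inr v \<Rightarrow> WV2 *v (\<Phi>1 *v wE v)) = (if i = j then 1 else 0)"
    using A unfolding assumptionA_def orthonormal_family_def IB_def by blast
  have inA: "IE a \<in> IA" "IPhiE a \<in> IA" "IU a \<in> IA" if "a \<in> {1..V}" for a
    using that unfolding IA_def by auto
  have inR: "IR i \<in> IA" if "i \<le> T - 1" for i
    using that unfolding IA_def by auto
  have inB: "Inl a \<in> IB" "Inr a \<in> IB" if "a \<in> {1..V}" for a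
    using that unfolding IB_def by auto
  have EE: "wE a \<bullet> wE b = (if a = b then 1 else 0)" if "a \<in> {1..V}" "b \<in> {1..V}" for a b
    using on1[OF inA(1)[OF that(1)] inA(1)[OF that(2)]] by simp
  have EP: "wE a \<bullet> P b = 0" if "a \<in> {1..V}" "b \<in> {1..V}" for a b
    using on1[OF inA(1)[OF that(1)] inA(2)[OF that(2)]] by (simp add: P_def)
  have EU: "wE a \<bullet> wU b = 0" if "a \<in> {1..V}" "b \<in> {1..V}" for a b
    using on1[OF inA(1)[OF that(1)] inA(3)[OF that(2)]] by simp
  have PP: "P a \<bullet> P b = (if a = b then 1 else 0)" if "a \<in> {1..V}" "b \<in> {1..V}" for a b
    using on1[OF inA(2)[OF that(1)] inA(2)[OF that(2)]] by (simp add: P_def)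
  have PU: "P a \<bullet> wU b = 0" if "a \<in> {1..V}" "b \<in> {1..V}" for a b
    using on1[OF inA(2)[OF that(1)] inA(3)[OF that(2)]] by (simp add: P_def)
  have UU: "wU a \<bullet> wU b = (if a = b then 1 else 0)" if "a \<in> {1..V}" "b \<in> {1..V}" for a b
    using on1[OF inA(3)[OF that(1)] inA(3)[OF that(2)]] by simp
  have rE: "r i \<bullet> wE b = 0" if "i \<le> T - 1" "b \<in> {1..V}" for i b
    using on1[OF inR[OF that(1)] inA(1)[OF that(2)]] by simp
  have rr: "r i \<bullet> r j = (if i = j then 1 else 0)" if "i \<le> T - 1" "j \<le> T - 1" for i j
    using on1[OF inR[OF that(1)] inR[OF that(2)]] by simp
  have VV: "(WV2 *v wE a) \<bullet> (WV2 *v wE b) = (if a = b then 1 else 0)" if "a \<in> {1..V}" "b \<in> {1..V}" for a b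
    using on2[OF inB(1)[OF that(1)] inB(1)[OF that(2)]] by simp
  have VW: "(WV2 *v wE a) \<bullet> (WV2 *v P b) = 0" if "a \<in> {1..V}" "b \<in> {1..V}" for a b
    using on2[OF inB(1)[OF that(1)] inB(2)[OF that(2)]] by (simp add: P_def)
  have zr: "z s \<in> {1..V}" if "s \<in> {1..T}" for s using z_range that by blast
  have qV: "q \<in> {1..V}" using zr[of T] T2 zT by auto
  have sumE: "(\<Sum>k\<in>{1..V}. c * (wE k \<bullet> wE x)) = c" if "x \<in> {1..V}" for c x
  proof -
    have "(\<Sum>k\<in>{1..V}. c * (wE k \<bullet> wE x)) = (\<Sum>k\<in>{1..V}. if k = x then c else 0)"
      by (rule sum.cong) (use EE[OF _ that] in auto)
    then show ?thesis using that by simp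
  qed
  have score1: "(WK1 wE r V \<tau>1 *v (wE (z s) + r (t - s))) \<bullet> wE (z t) = \<tau>1 * (if s = t - 1 then 1 else 0)"
    if t: "t \<in> {1..T}" and s: "s \<in> {1..t}" for t s
  proof -
    have "WK1 wE r V \<tau>1 *v y = \<tau>1 *\<^sub>R (\<Sum>k\<in>{1..V}. (r 1 \<bullet> y) *\<^sub>R wE k)" for y
      by (simp add: WK1_def smult_mv sum_mv outer_mv)
    then have "(WK1 wE r V \<tau>1 *v y) \<bullet> wE (z t) = \<tau>1 * (r 1 \<bullet> y)" for y
      using sumE[OF zr[OF t], of "r 1 \<bullet> y"] by (simp add: inner_sum_left)
    moreover have "r 1 \<bullet> (wE (z s) + r (t - s)) = (if s = t - 1 then 1 else 0)"
    proof -
      have "r 1 \<bullet> wE (z s) = 0" using rE[of 1 "z s"] zr[of s] t s T2 by auto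
      moreover have "r 1 \<bullet> r (t - s) = (if 1 = t - s then 1 else 0)" using rr[of 1 "t - s"] t s T2 by auto
      moreover have "(1 = t - s) = (s = t - 1)" using s by auto
      ultimately show ?thesis by (simp add: inner_add_right)
    qed
    ultimately show ?thesis by simp
  qed
  define X where "X = layer1 wE r \<Phi>1 V z \<tau>1"
  have L1: "X t = (\<Sum>s\<in>{1..t}. \<alpha>f \<tau>1 t s *\<^sub>R P (z s)) + wE (z t)" if t: "t \<in> {1..T}" for t
    unfolding X_def layer1_def P_def \<alpha>f_def
    by (intro arg_cong2[where f="(+)"] sum.cong refl arg_cong2[where f="(*\<^sub>R)"] softmax_cong')
       (use score1[OF t] in auto)
  have D1: "P q \<bullet> X t = \<beta> \<tau>1 t" if t: "t \<in> {1..T}" for t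
  proof -
    have "P q \<bullet> X t = (\<Sum>s\<in>{1..t}. \<alpha>f \<tau>1 t s * (P q \<bullet> P (z s))) + P q \<bullet> wE (z t)"
      by (simp add: L1[OF t] inner_add_right inner_sum_right)
    also have "P q \<bullet> wE (z t) = 0" using EP[OF zr[OF t] qV] by (simp add: inner_commute)
    also have "(\<Sum>s\<in>{1..t}. \<alpha>f \<tau>1 t s * (P q \<bullet> P (z s))) = \<beta> \<tau>1 t"
      unfolding \<beta>_def by (rule sum.cong) (use t zr qV PP in auto)
    finally show ?thesis by simp
  qed
  have T1: "T \<in> {1..T}" using T2 by auto
  have D2: "wE k \<bullet> X T = (if k = q then 1 else 0)" if k: "k \<in> {1..V}" for k
  proof -
    have "wE k \<bullet> X T = (\<Sum>s\<in>{1..T}. \<alpha>f \<tau>1 T s * (wE k \<bullet> P (z s))) + wE k \<bullet> wE q"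
      by (simp add: L1[OF T1] inner_add_right inner_sum_right zT)
    also have "(\<Sum>s\<in>{1..T}. \<alpha>f \<tau>1 T s * (wE k \<bullet> P (z s))) = 0"
      by (rule sum.neutral) (use k zr EP in auto)
    finally show ?thesis using EE[OF k qV] by simp
  qed
  have D3: "(WV2 *v wE u) \<bullet> (WV2 *v X t) = (if u = z t then 1 else 0)" if u: "u \<in> {1..V}" and t: "t \<in> {1..T}" for u t
  proof -
    have "(WV2 *v wE u) \<bullet> (WV2 *v X t) = (\<Sum>s\<in>{1..t}. \<alpha>f \<tau>1 t s * ((WV2 *v wE u) \<bullet> (WV2 *v P (z s)))) + (WV2 *v wE u) \<bullet> (WV2 *v wE (z t))"
      by (simp add: L1[OF t] inner_add_right inner_sum_right matrix_vector_right_distrib mv_sum matrix_vector_mult_scaleR)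
    also have "(\<Sum>s\<in>{1..t}. \<alpha>f \<tau>1 t s * ((WV2 *v wE u) \<bullet> (WV2 *v P (z s)))) = 0"
      by (rule sum.neutral) (use u t zr VW in auto)
    finally show ?thesis using VV[OF u zr[OF t]] by simp
  qed
  have D4: "wU u \<bullet> X T = 0" if u: "u \<in> {1..V}" for u
  proof -
    have "wU u \<bullet> X T = (\<Sum>s\<in>{1..T}. \<alpha>f \<tau>1 T s * (wU u \<bullet> P (z s))) + wU u \<bullet> wE q"
      by (simp add: L1[OF T1] inner_add_right inner_sum_right zT)
    also have "(\<Sum>s\<in>{1..T}. \<alpha>f \<tau>1 T s * (wU u \<bullet> P (z s))) = 0"
    proof (rule sum.neutral, intro ballI)
      fix s assume "s \<in> {1..T}"
      then have "wU u \<bullet> P (z s) = 0" using PU[OF zr[of s] u] by (simp add: inner_commute)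
      then show "\<alpha>f \<tau>1 T s * (wU u \<bullet> P (z s)) = 0" by simp
    qed
    finally show ?thesis using EU[OF qV u] by (simp add: inner_commute)
  qed
  have score2: "(WK2 wE \<Phi>1 V \<tau>2 *v X s) \<bullet> X T = \<tau>2 * \<beta> \<tau>1 s" if s: "s \<in> {1..T}" for s
  proof -
    have "WK2 wE \<Phi>1 V \<tau>2 *v y = \<tau>2 *\<^sub>R (\<Sum>k\<in>{1..V}. (P k \<bullet> y) *\<^sub>R wE k)" for y
      by (simp add: WK2_def smult_mv sum_mv outer_mv P_def)
    then have "(WK2 wE \<Phi>1 V \<tau>2 *v X s) \<bullet> X T = \<tau>2 * (\<Sum>k\<in>{1..V}. (P k \<bullet> X s) * (wE k \<bullet> X T))"
      by (simp add: inner_sum_left)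
    also have "(\<Sum>k\<in>{1..V}. (P k \<bullet> X s) * (wE k \<bullet> X T)) = (\<Sum>k\<in>{1..V}. if k = q then P q \<bullet> X s else 0)"
      by (rule sum.cong) (auto simp: D2)
    also have "\<dots> = P q \<bullet> X s" using qV by simp
    finally show ?thesis using D1[OF s] by simp
  qed
  have val: "WO2 wE wU WV2 V \<tau>3 *v (WV2 *v X s) = \<tau>3 *\<^sub>R wU (z s)" if s: "s \<in> {1..T}" for s
  proof -
    have "WO2 wE wU WV2 V \<tau>3 *v (WV2 *v X s) = \<tau>3 *\<^sub>R (\<Sum>u\<in>{1..V}. ((WV2 *v wE u) \<bullet> (WV2 *v X s)) *\<^sub>R wU u)"
      by (simp add: WO2_def smult_mv sum_mv outer_mv)
    also have "(\<Sum>u\<in>{1..V}. ((WV2 *v wE u) \<bullet> (WV2 *v X s)) *\<^sub>R wU u) = (\<Sum>u\<in>{1..V}. if u = z s then wU u else 0)"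
      by (rule sum.cong) (use s zr[OF s] in \<open>auto simp: D3\<close>)
    also have "\<dots> = wU (z s)" using zr[OF s] by simp
    finally show ?thesis .
  qed
  define \<sigma> where "\<sigma> = (\<lambda>s. softmax (\<lambda>s. \<tau>2 * \<beta> \<tau>1 s) {1..T} s)"
  have L2: "layer2 wE wU r \<Phi>1 WV2 V T z \<tau>1 \<tau>2 \<tau>3 = (\<Sum>s\<in>{1..T}. \<sigma> s *\<^sub>R (\<tau>3 *\<^sub>R wU (z s))) + X T"
    unfolding layer2_def Let_def X_def[symmetric] \<sigma>_def
    by (intro arg_cong2[where f="(+)"] sum.cong refl arg_cong2[where f="(*\<^sub>R)"] softmax_cong')
       (auto simp: score2 val)
  have E2: "wE k \<bullet> layer2 wE wU r \<Phi>1 WV2 V T z \<tau>1 \<tau>2 \<tau>3 = (if k = q then 1 else 0)" if k: "k \<in> {1..V}" for k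
  proof -
    have "(\<Sum>s\<in>{1..T}. \<sigma> s * (\<tau>3 * (wE k \<bullet> wU (z s)))) = 0"
      by (rule sum.neutral) (use k zr EU in auto)
    then show ?thesis by (simp add: L2 inner_add_right inner_sum_right D2[OF k] mult.assoc)
  qed
  define W where "W = (\<lambda>v. \<Sum>u\<in>{1..V}. ln (pib u v) *\<^sub>R wU u)"
  have F: "ffn_out wE wU r \<Phi>1 WV2 pib V T z \<tau>1 \<tau>2 \<tau>3 = W q + layer2 wE wU r \<Phi>1 WV2 V T z \<tau>1 \<tau>2 \<tau>3"
  proof -
    have "(\<Sum>k\<in>{1..V}. relu (wE k \<bullet> layer2 wE wU r \<Phi>1 WV2 V T z \<tau>1 \<tau>2 \<tau>3) *\<^sub>R W k) = (\<Sum>k\<in>{1..V}. if k = q then W k else 0)"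
      by (rule sum.cong) (auto simp: E2 relu_def)
    also have "\<dots> = W q" using qV by simp
    finally show ?thesis unfolding ffn_out_def Let_def W_def by simp
  qed
  have "wU v \<bullet> W q = (\<Sum>u\<in>{1..V}. ln (pib u q) * (wU v \<bullet> wU u))"
    by (simp add: W_def inner_sum_right)
  also have "\<dots> = (\<Sum>u\<in>{1..V}. if u = v then ln (pib u q) else 0)"
    by (rule sum.cong) (use v in \<open>auto simp: UU\<close>)
  also have "\<dots> = ln (pib v q)" using v by simp
  finally have U1: "wU v \<bullet> W q = ln (pib v q)" .
  have U2: "wU v \<bullet> layer2 wE wU r \<Phi>1 WV2 V T z \<tau>1 \<tau>2 \<tau>3 = \<tau>3 * (\<Sum>s\<in>{1..T}. \<sigma> s * (if z s = v then 1 else 0))"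
  proof -
    have "wU v \<bullet> layer2 wE wU r \<Phi>1 WV2 V T z \<tau>1 \<tau>2 \<tau>3 = (\<Sum>s\<in>{1..T}. \<sigma> s * (\<tau>3 * (wU v \<bullet> wU (z s))))"
      by (simp add: L2 inner_add_right inner_sum_right D4[OF v] mult.assoc)
    also have "\<dots> = \<tau>3 * (\<Sum>s\<in>{1..T}. \<sigma> s * (if z s = v then 1 else 0))"
    proof -
      have "(\<Sum>s\<in>{1..T}. \<sigma> s * (\<tau>3 * (wU v \<bullet> wU (z s)))) = (\<Sum>s\<in>{1..T}. \<tau>3 * (\<sigma> s * (if z s = v then 1 else 0)))"
      proof (rule sum.cong[OF refl])
        fix s assume "s \<in> {1..T}"
        then show "\<sigma> s * (\<tau>3 * (wU v \<bullet> wU (z s))) = \<tau>3 * (\<sigma> s * (if z s = v then 1 else 0))"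
          using UU[OF v zr[of s]] by auto
      qed
      then show ?thesis by (simp add: sum_distrib_left)
    qed
    finally show ?thesis .
  qed
  show ?thesis unfolding xi_def F inner_add_right U1 U2 \<sigma>_def by simp
qed


lemma softmax_tendsto:
  assumes S: "finite S" "S \<noteq> {}" and t: "t \<in> S"
    and lim: "\<And>s. s \<in> S \<Longrightarrow> ((\<lambda>x. f x s) \<longlongrightarrow> g s) F"
  shows "((\<lambda>x. softmax (f x) S t) \<longlongrightarrow> softmax g S t) F"
proof -
  have pos: "(\<Sum>s\<in>S. exp (g s)) > 0" using S by (intro sum_pos) auto
  have num: "((\<lambda>x. exp (f x t)) \<longlongrightarrow> exp (g t)) F" by (rule tendsto_exp[OF lim[OF t]])
  have den: "((\<lambda>x. \<Sum>s\<in>S. exp (f x s)) \<longlongrightarrow> (\<Sum>s\<in>S. exp (g s))) F"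
    by (rule tendsto_sum) (rule tendsto_exp[OF lim])
  show ?thesis unfolding softmax_def
    using tendsto_divide[OF num den] pos by simp

qed

theorem corollary1:
  fixes wE wU r :: "nat \<Rightarrow> real^'d"
    and \<Phi>1 WV2 :: "real^'d^'d"
    and pib :: "nat \<Rightarrow> nat \<Rightarrow> real"
    and V T q v1 v2 :: nat
    and z :: "nat \<Rightarrow> nat"
    and \<tau>3 :: real
  assumes A: "assumptionA wE wU r \<Phi>1 WV2 V T"
    and pib_pos: "\<forall>u\<in>{1..V}. \<forall>v\<in>{1..V}. pib u v > 0"
    and pib_sum: "\<forall>v\<in>{1..V}. (\<Sum>u\<in>{1..V}. pib u v) = 1"
    and tau3: "\<tau>3 > 0"
    and T2: "T \<ge> 2"
    and z_range: "\<forall>s\<in>{1..T}. z s \<in> {1..V}"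
    and zT: "z T = q"
    and z1: "z 1 \<noteq> q"
    and v1: "v1 \<in> {1..V}" and v2: "v2 \<in> {1..V}" and v12: "v1 \<noteq> v2"
    and f0: "\<forall>v\<in>{1..V} - {v1, v2}. fcount z T q v = 0"
    and f12: "fcount z T q v1 + fcount z T q v2 \<ge> 1"
  shows "\<exists>L :: real \<Rightarrow> nat \<Rightarrow> real. \<exists>\<xi>s :: nat \<Rightarrow> real.
           (\<forall>v\<in>{1..V}. \<forall>\<tau>2>0.
              ((\<lambda>\<tau>1. xi wE wU r \<Phi>1 WV2 pib V T z \<tau>1 \<tau>2 \<tau>3 v) \<longlongrightarrow> L \<tau>2 v) at_top) \<and>
           (\<forall>v\<in>{1..V}. ((\<lambda>\<tau>2. L \<tau>2 v) \<longlongrightarrow> \<xi>s v) at_top) \<and>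
           (\<forall>m\<in>{1..V}. (\<forall>v\<in>{1..V}. \<xi>s v \<le> \<xi>s m) \<longrightarrow>
              m \<in> {v1, v2} \<union>
                {u\<in>{1..V} - {v1, v2}. \<forall>w\<in>{1..V} - {v1, v2}. pib w q \<le> pib u q})"
proof -
  define \<alpha>f where "\<alpha>f = (\<lambda>\<tau>1 t s. softmax (\<lambda>s. \<tau>1 * (if s = t - 1 then 1 else 0)) {1..t} s)"
  define \<beta> where "\<beta> = (\<lambda>\<tau>1 s. \<Sum>s'\<in>{1..s}. \<alpha>f \<tau>1 s s' * (if z s' = q then 1 else 0))"
  define e where "e = (\<lambda>s. if 2 \<le> s \<and> z (s - 1) = q then 1 else 0 :: real)"
  have zr: "z s \<in> {1..V}" if "s \<in> {1..T}" for s using z_range that by blast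
  have qV: "q \<in> {1..V}" using zr[of T] T2 zT by auto
  have cf: "xi wE wU r \<Phi>1 WV2 pib V T z \<tau>1 \<tau>2 \<tau>3 v = ln (pib v q) + \<tau>3 *
      (\<Sum>s\<in>{1..T}. softmax (\<lambda>s. \<tau>2 * \<beta> \<tau>1 s) {1..T} s * (if z s = v then 1 else 0))"
    if v: "v \<in> {1..V}" for \<tau>1 \<tau>2 v
    unfolding \<beta>_def \<alpha>f_def by (rule xi_closed[OF A T2 z_range zT v])
  have \<beta>lim: "((\<lambda>\<tau>1. \<beta> \<tau>1 s) \<longlongrightarrow> e s) at_top" if s: "s \<in> {1..T}" for s
  proof (cases "s = 1")
    case True
    then show ?thesis using z1 by (simp add: \<beta>_def e_def)
  next
    case False
    then have s2: "s \<ge> 2" using s by auto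
    define ind where "ind = (\<lambda>s'. if s' = s - 1 then 1 else 0 :: real)"
    have set1: "{s'\<in>{1..s}. ind s' = 1} = {s - 1}" using s2 by (auto simp: ind_def)
    have alim: "((\<lambda>\<tau>1. \<alpha>f \<tau>1 s s') \<longlongrightarrow> ind s') at_top" if s': "s' \<in> {1..s}" for s'
    proof -
      have "((\<lambda>\<tau>. softmax (\<lambda>s. \<tau> * ind s) {1..s} s') \<longlongrightarrow> ind s' / card {s'\<in>{1..s}. ind s' = 1}) at_top"
        by (rule softmax_lim) (use s' set1 in \<open>auto simp: ind_def\<close>)
      then show ?thesis using set1 by (simp add: \<alpha>f_def ind_def)
    qed
    have "((\<lambda>\<tau>1. \<beta> \<tau>1 s) \<longlongrightarrow> (\<Sum>s'\<in>{1..s}. ind s' * (if z s' = q then 1 else 0))) at_top"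
      unfolding \<beta>_def by (intro tendsto_sum tendsto_mult_right alim)
    moreover have "(\<Sum>s'\<in>{1..s}. ind s' * (if z s' = q then 1 else 0)) =
        (\<Sum>s'\<in>{1..s}. if s' = s - 1 then (if z (s - 1) = q then 1 else 0) else 0)"
      by (rule sum.cong) (auto simp: ind_def)
    moreover have "\<dots> = e s"
    proof -
      have "s - 1 \<in> {1..s}" using s2 by auto
      then show ?thesis using s2 by (simp add: e_def)
    qed
    ultimately show ?thesis by simp
  qed
  define L where "L = (\<lambda>\<tau>2 v. ln (pib v q) + \<tau>3 *
      (\<Sum>s\<in>{1..T}. softmax (\<lambda>s. \<tau>2 * e s) {1..T} s * (if z s = v then 1 else 0)))"
  define N where "N = card {s\<in>{1..T}. e s = 1}"
  define \<xi>s where "\<xi>s = (\<lambda>v. ln (pib v q) + \<tau>3 * (\<Sum>s\<in>{1..T}. e s / N * (if z s = v then 1 else 0)))"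
  have T1: "{1..T} \<noteq> {}" using T2 by auto
  have lim1: "((\<lambda>\<tau>1. xi wE wU r \<Phi>1 WV2 pib V T z \<tau>1 \<tau>2 \<tau>3 v) \<longlongrightarrow> L \<tau>2 v) at_top"
    if v: "v \<in> {1..V}" for \<tau>2 v
    unfolding cf[OF v] L_def
  proof (rule tendsto_add[OF tendsto_const], rule tendsto_mult[OF tendsto_const], rule tendsto_sum)
    fix s assume s: "s \<in> {1..T}"
    have "((\<lambda>\<tau>1. softmax (\<lambda>s. \<tau>2 * \<beta> \<tau>1 s) {1..T} s) \<longlongrightarrow> softmax (\<lambda>s. \<tau>2 * e s) {1..T} s) at_top"
      by (rule softmax_tendsto[OF finite_atLeastAtMost T1 s]) (rule tendsto_mult[OF tendsto_const \<beta>lim])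
    then show "((\<lambda>\<tau>1. softmax (\<lambda>s. \<tau>2 * \<beta> \<tau>1 s) {1..T} s * (if z s = v then 1 else 0)) \<longlongrightarrow>
        softmax (\<lambda>s. \<tau>2 * e s) {1..T} s * (if z s = v then 1 else 0)) at_top"
      by (rule tendsto_mult_right)
  qed
  have N1: "N \<ge> 1"
  proof -
    obtain vv where "fcount z T q vv \<ge> 1" using f12
      by (metis add_is_0 less_one not_less)
    then have "card {s\<in>{2..T}. z (s - 1) = q \<and> z s = vv} \<noteq> 0" unfolding fcount_def by linarith
    then have "{s\<in>{2..T}. z (s - 1) = q \<and> z s = vv} \<noteq> {}" by (metis card.empty)
    then obtain s where "s \<in> {2..T}" "z (s - 1) = q" by auto
    then have "s \<in> {s\<in>{1..T}. e s = 1}" by (auto simp: e_def)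
    moreover have "finite {s\<in>{1..T}. e s = 1}" by simp
    ultimately have "card {s\<in>{1..T}. e s = 1} > 0" by (subst card_gt_0_iff) blast
    then show ?thesis unfolding N_def by linarith
  qed
  have lim2: "((\<lambda>\<tau>2. L \<tau>2 v) \<longlongrightarrow> \<xi>s v) at_top" if v: "v \<in> {1..V}" for v
    unfolding L_def \<xi>s_def
  proof (rule tendsto_add[OF tendsto_const], rule tendsto_mult[OF tendsto_const], rule tendsto_sum)
    fix s assume s: "s \<in> {1..T}"
    have "((\<lambda>\<tau>2. softmax (\<lambda>s. \<tau>2 * e s) {1..T} s) \<longlongrightarrow> e s / N) at_top"
      unfolding N_def by (rule softmax_lim) (use s N1 in \<open>auto simp: e_def N_def\<close>)
    then show "((\<lambda>\<tau>2. softmax (\<lambda>s. \<tau>2 * e s) {1..T} s * (if z s = v then 1 else 0)) \<longlongrightarrow>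
        e s / N * (if z s = v then 1 else 0)) at_top"
      by (rule tendsto_mult_right)
  qed
  have \<xi>0: "\<xi>s w = ln (pib w q)" if w: "w \<in> {1..V} - {v1, v2}" for w
  proof -
    have fw: "{s\<in>{2..T}. z (s - 1) = q \<and> z s = w} = {}"
      using f0 w unfolding fcount_def by auto
    have "(\<Sum>s\<in>{1..T}. e s / N * (if z s = w then 1 else 0)) = 0"
    proof (rule sum.neutral, intro ballI)
      fix s assume s: "s \<in> {1..T}"
      show "e s / N * (if z s = w then 1 else 0) = 0"
      proof (cases "2 \<le> s \<and> z (s - 1) = q \<and> z s = w")
        case True then show ?thesis using fw s by auto
      next
        case False then show ?thesis by (auto simp: e_def)
      qed
    qed
    then show ?thesis by (simp add: \<xi>s_def)
  qed
  show ?thesis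
  proof (intro exI conjI ballI allI impI)
    show "((\<lambda>\<tau>1. xi wE wU r \<Phi>1 WV2 pib V T z \<tau>1 \<tau>2 \<tau>3 v) \<longlongrightarrow> L \<tau>2 v) at_top"
      if "v \<in> {1..V}" for v \<tau>2 using lim1 that by blast
    show "((\<lambda>\<tau>2. L \<tau>2 v) \<longlongrightarrow> \<xi>s v) at_top" if "v \<in> {1..V}" for v using lim2 that by blast
  next
    fix m assume m: "m \<in> {1..V}" and mx: "\<forall>v\<in>{1..V}. \<xi>s v \<le> \<xi>s m"
    show "m \<in> {v1, v2} \<union> {u\<in>{1..V} - {v1, v2}. \<forall>w\<in>{1..V} - {v1, v2}. pib w q \<le> pib u q}"
    proof (cases "m \<in> {v1, v2}")
      case True then show ?thesis by blast
    next
      case False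
      have "pib w q \<le> pib m q" if w: "w \<in> {1..V} - {v1, v2}" for w
      proof -
        have "ln (pib w q) \<le> ln (pib m q)"
        proof -
          have "w \<in> {1..V}" using w by blast
          then have "\<xi>s w \<le> \<xi>s m" using mx by blast
          moreover have "m \<in> {1..V} - {v1, v2}" using m False by blast
          ultimately show ?thesis using \<xi>0[OF w] \<xi>0[of m] by simp
        qed
        moreover have "pib w q > 0" "pib m q > 0" using pib_pos w m qV by auto
        ultimately show ?thesis by simp
      qed
      then show ?thesis using m False by blast
    qed
  qed
qed

end
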